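(* Let $X$, $Y$, $Z$ be random variables with values in $\mathcal{X}$, $\mathcal{Y}$, $\mathcal{Z}$ and joint distribution $P_{X,Y,Z}$, and let $n\ge 1$ be an integer. For $z\in\mathcal{Z}$ let $(x_1,y_1),\dots,(x_n,y_n)$ denote $n$ independent samples from the conditional joint distribution $P_{X,Y|Z=z}$ (written $(x_i,y_i)\sim P_{X,Y|z}^{\otimes n}$), and fix an index $i\in\{1,\dots,n\}$. Define $$\mathrm{C\text{-}InfoNCE}:=\sup_{f}\ \mathbb{E}_{z\sim P_Z}\Bigg[\mathbb{E}_{(x_i,y_i)\sim P_{X,Y|z}^{\otimes n}}\Big[\log\frac{e^{f(x_i,y_i,z)}}{\frac{1}{n}\sum_{j=1}^n e^{f(x_i,y_j,z)}}\Big]\Bigg],$$ where the supremum is over functions $f:\mathcal{X}\times\mathcal{Y}\times\mathcal{Z}\to\mathbb{R}$. Then $$\mathrm{C\text{-}InfoNCE}\le \mathbb{E}_{P_Z}\Big[D_{\mathrm{KL}}\big(P_{X,Y|Z}\,\|\,P_{X|Z}P_{Y|Z}\big)\Big]=\mathrm{MI}(X;Y|Z).$$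
   Context: $D_{\mathrm{KL}}$ denotes the Kullback–Leibler divergence. $P_Z$ is the marginal of $Z$; $P_{X,Y|Z=z}$, $P_{X|Z=z}$, $P_{Y|Z=z}$ are the conditional joint and conditional marginal distributions, and $P_{X|Z=z}P_{Y|Z=z}$ is their product measure. The conditional mutual information is $\mathrm{MI}(X;Y|Z):=\mathbb{E}_{z\sim P_Z}\big[D_{\mathrm{KL}}(P_{X,Y|Z=z}\,\|\,P_{X|Z=z}P_{Y|Z=z})\big]$. The functions $f$ are assumed measurable with all expectations well-defined. *)

theory Defs
  imports "HOL-Probability.Probability"
begin

text \<open>It is the library's KL divergence (integral of ln(dP/dQ) w.r.t. P) when P is absolutely
  continuous w.r.t. Q and the log-density is P-integrable, and infinity otherwise (the negative
  part of the log-density is always P-integrable, so non-integrability means the value is infinite).\<close>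
definition D_KL :: "'a measure \<Rightarrow> 'a measure \<Rightarrow> ennreal" where
  "D_KL P Q =
     (if absolutely_continuous Q P \<and> integrable P (entropy_density (exp 1) Q P)
      then ennreal (KL_divergence (exp 1) Q P) else \<infinity>)"

definition is_cond_kernel ::
  "'x measure \<Rightarrow> 'y measure \<Rightarrow> 'z measure \<Rightarrow> ('x \<times> 'y \<times> 'z) measure \<Rightarrow> 'z measure
     \<Rightarrow> ('z \<Rightarrow> ('x \<times> 'y) measure) \<Rightarrow> bool" where
  "is_cond_kernel MX MY MZ P PZ K \<longleftrightarrow>
     PZ = distr P MZ (\<lambda>w. snd (snd w)) \<and>
     K \<in> measurable MZ (prob_algebra (MX \<Otimes>\<^sub>M MY)) \<and>
     (\<forall>A \<in> sets (MX \<Otimes>\<^sub>M MY). \<forall>C \<in> sets MZ.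
        emeasure P {w \<in> space P. (fst w, fst (snd w)) \<in> A \<and> snd (snd w) \<in> C}
          = (\<integral>\<^sup>+ z. indicator C z * emeasure (K z) A \<partial>PZ))"

definition cond_MI :: "'x measure \<Rightarrow> 'y measure \<Rightarrow> 'z measure \<Rightarrow> ('z \<Rightarrow> ('x \<times> 'y) measure) \<Rightarrow> ennreal" where
  "cond_MI MX MY PZ K =
     (\<integral>\<^sup>+ z. D_KL (K z) (distr (K z) MX fst \<Otimes>\<^sub>M distr (K z) MY snd) \<partial>PZ)"

definition cinfonce_term :: "nat \<Rightarrow> nat \<Rightarrow> ('x \<times> 'y \<times> 'z \<Rightarrow> real) \<Rightarrow> 'z \<Rightarrow> (nat \<Rightarrow> 'x \<times> 'y) \<Rightarrow> real" where
  "cinfonce_term n i f z w =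
     ln (exp (f (fst (w i), snd (w i), z)) /
         ((1 / real n) * (\<Sum>j<n. exp (f (fst (w i), snd (w j), z)))))"

definition cinfonce_inner :: "nat \<Rightarrow> nat \<Rightarrow> ('z \<Rightarrow> ('x \<times> 'y) measure) \<Rightarrow> ('x \<times> 'y \<times> 'z \<Rightarrow> real) \<Rightarrow> 'z \<Rightarrow> real" where
  "cinfonce_inner n i K f z = (\<integral> w. cinfonce_term n i f z w \<partial>(PiM {..<n} (\<lambda>_. K z)))"

definition admissible_critic ::
  "'x measure \<Rightarrow> 'y measure \<Rightarrow> 'z measure \<Rightarrow> 'z measure \<Rightarrow> ('z \<Rightarrow> ('x \<times> 'y) measure)
     \<Rightarrow> nat \<Rightarrow> nat \<Rightarrow> ('x \<times> 'y \<times> 'z \<Rightarrow> real) \<Rightarrow> bool" where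
  "admissible_critic MX MY MZ PZ K n i f \<longleftrightarrow>
     f \<in> borel_measurable (MX \<Otimes>\<^sub>M MY \<Otimes>\<^sub>M MZ) \<and>
     (\<forall>z \<in> space PZ. integrable (PiM {..<n} (\<lambda>_. K z)) (cinfonce_term n i f z)) \<and>
     integrable PZ (cinfonce_inner n i K f)"

definition C_InfoNCE ::
  "'x measure \<Rightarrow> 'y measure \<Rightarrow> 'z measure \<Rightarrow> 'z measure \<Rightarrow> ('z \<Rightarrow> ('x \<times> 'y) measure)
     \<Rightarrow> nat \<Rightarrow> nat \<Rightarrow> ereal" where
  "C_InfoNCE MX MY MZ PZ K n i =
     (SUP f \<in> {f. admissible_critic MX MY MZ PZ K n i f}.
        ereal (\<integral> z. cinfonce_inner n i K f z \<partial>PZ))"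

end

theory Submission
  imports Defs
begin
lemma infonce_sym:
  fixes \<mu> :: "'a measure" and h :: "'a \<Rightarrow> real"
  assumes P: "prob_space \<mu>" and hm[measurable]: "h \<in> borel_measurable \<mu>" and i: "i < n"
  shows "of_nat n * (\<integral>\<^sup>+ w. ennreal (exp (h (w i)) / (\<Sum>j<n. exp (h (w j)))) \<partial>PiM {..<n} (\<lambda>_. \<mu>)) = 1"
proof -
  let ?M = "PiM {..<n} (\<lambda>_. \<mu>)"
  interpret PM: prob_space ?M using P by (intro prob_space_PiM) auto
  have comp: "(\<lambda>w. w j) \<in> measurable ?M \<mu>" if "j < n" for j
    using measurable_component_singleton[of j "{..<n}" "\<lambda>_. \<mu>"] that by simp
  define F where "F k w = ennreal (exp (h (w k)) / (\<Sum>j<n. exp (h (w j))))" for k w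
  have cm: "(\<lambda>w. exp (h (w j))) \<in> borel_measurable ?M" if "j < n" for j
  proof -
    have "(\<lambda>w. w j) \<in> measurable ?M \<mu>"
      using measurable_component_singleton[of j "{..<n}" "\<lambda>_. \<mu>"] that by simp
    from measurable_compose[OF this hm] show ?thesis by measurable
  qed
  have Fm: "F k \<in> borel_measurable ?M" if "k < n" for k
    unfolding F_def using that cm
    by (intro measurable_compose[OF _ measurable_ennreal] borel_measurable_divide borel_measurable_sum) auto
  have swap: "integral\<^sup>N ?M (F k) = integral\<^sup>N ?M (F i)" if k: "k < n" for k
  proof -
    define t where "t j = (if j = i then k else if j = k then i else j)" for j
    have bij: "bij_betw t {..<n} {..<n}"
      unfolding bij_betw_def inj_on_def t_def using i k by (auto simp: image_def)
    have inj: "inj_on t {..<n}" and tI: "t \<in> {..<n} \<rightarrow> {..<n}"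
      using bij by (auto simp: bij_betw_def)
    have D: "distr ?M ?M (\<lambda>\<omega>. \<lambda>j\<in>{..<n}. \<omega> (t j)) = ?M"
      using distr_PiM_reindex[of "{..<n}" "\<lambda>_. \<mu>" t "{..<n}", OF P inj tI] by simp
    have mt: "(\<lambda>\<omega>. \<lambda>j\<in>{..<n}. \<omega> (t j)) \<in> measurable ?M ?M"
      using tI by (intro measurable_restrict comp) auto
    have "integral\<^sup>N ?M (F i) = integral\<^sup>N (distr ?M ?M (\<lambda>\<omega>. \<lambda>j\<in>{..<n}. \<omega> (t j))) (F i)"
      using D by simp
    also have "\<dots> = (\<integral>\<^sup>+ \<omega>. F i (\<lambda>j\<in>{..<n}. \<omega> (t j)) \<partial>?M)"
      using Fm[OF i] by (intro nn_integral_distr[OF mt]) simp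
    also have "\<dots> = integral\<^sup>N ?M (F k)"
    proof (rule nn_integral_cong)
      fix \<omega> 
      have "(\<Sum>j<n. exp (h (\<omega> (t j)))) = (\<Sum>j<n. exp (h (\<omega> j)))"
        using sum.reindex_bij_betw[OF bij, of "\<lambda>j. exp (h (\<omega> j))"] by simp
      moreover have "t i = k" by (simp add: t_def)
      ultimately show "F i (\<lambda>j\<in>{..<n}. \<omega> (t j)) = F k \<omega>"
        unfolding F_def using i tI by auto
    qed
    finally show ?thesis ..
  qed
  have pos: "0 < (\<Sum>j<n. exp (h (w j)))" for w
    using i by (intro sum_pos) auto
  have "of_nat n * integral\<^sup>N ?M (F i) = (\<Sum>k<n. integral\<^sup>N ?M (F k))"
    using swap by simp
  also have "\<dots> = (\<integral>\<^sup>+ w. (\<Sum>k<n. F k w) \<partial>?M)"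
    by (rule nn_integral_sum[symmetric]) (auto intro: Fm)
  also have "\<dots> = (\<integral>\<^sup>+ w. 1 \<partial>?M)"
  proof (rule nn_integral_cong)
    fix w
    have "(\<Sum>k<n. F k w) = ennreal (\<Sum>k<n. exp (h (w k)) / (\<Sum>j<n. exp (h (w j))))"
      unfolding F_def by (rule sum_ennreal) (auto intro: divide_nonneg_nonneg less_imp_le[OF pos])
    also have "(\<Sum>k<n. exp (h (w k)) / (\<Sum>j<n. exp (h (w j)))) = 1"
      using pos[of w] by (simp add: sum_divide_distrib[symmetric])
    finally show "(\<Sum>k<n. F k w) = 1" by simp
  qed
  also have "\<dots> = 1" by (simp add: PM.emeasure_space_1)
  finally show ?thesis unfolding F_def .
qed


lemma infonce_core:
  fixes \<mu> :: "('x \<times> 'y) measure" and MX :: "'x measure" and MY :: "'y measure"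
    and g :: "'x \<Rightarrow> 'y \<Rightarrow> real"
  assumes P: "prob_space \<mu>" and sets[measurable_cong]: "sets \<mu> = sets (MX \<Otimes>\<^sub>M MY)"
    and gm[measurable]: "(\<lambda>(a,b). g a b) \<in> borel_measurable (MX \<Otimes>\<^sub>M MY)"
    and i: "i < n"
    and ac: "absolutely_continuous (distr \<mu> MX fst \<Otimes>\<^sub>M distr \<mu> MY snd) \<mu>"
    and Tint: "integrable (PiM {..<n} (\<lambda>_. \<mu>)) (\<lambda>w. ln (exp (g (fst (w i)) (snd (w i))) /
                 ((1 / real n) * (\<Sum>j<n. exp (g (fst (w i)) (snd (w j)))))))"
    and KLint: "integrable \<mu> (\<lambda>u. ln (enn2real (RN_deriv (distr \<mu> MX fst \<Otimes>\<^sub>M distr \<mu> MY snd) \<mu> u)))"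
  shows "(\<integral>w. ln (exp (g (fst (w i)) (snd (w i))) /
                 ((1 / real n) * (\<Sum>j<n. exp (g (fst (w i)) (snd (w j)))))) \<partial>PiM {..<n} (\<lambda>_. \<mu>))
         \<le> (\<integral>u. ln (enn2real (RN_deriv (distr \<mu> MX fst \<Otimes>\<^sub>M distr \<mu> MY snd) \<mu> u)) \<partial>\<mu>)"
proof -
  define \<mu>X where "\<mu>X = distr \<mu> MX fst"
  define \<mu>Y where "\<mu>Y = distr \<mu> MY snd"
  define \<nu> where "\<nu> = \<mu>X \<Otimes>\<^sub>M \<mu>Y"
  define p where "p u = enn2real (RN_deriv \<nu> \<mu> u)" for u
  define T where "T w = ln (exp (g (fst (w i)) (snd (w i))) /
                 ((1 / real n) * (\<Sum>j<n. exp (g (fst (w i)) (snd (w j))))))" for w :: "nat \<Rightarrow> 'x \<times> 'y"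
  let ?M = "PiM {..<n} (\<lambda>_. \<mu>)"
  interpret \<mu>: prob_space \<mu> by (rule P)
  interpret PM: prob_space ?M using P by (intro prob_space_PiM) auto
  have iI[measurable]: "i \<in> {..<n}" using i by simp
  have mfst[measurable]: "fst \<in> measurable \<mu> MX" by measurable
  have msnd[measurable]: "snd \<in> measurable \<mu> MY" by measurable
  have PX: "prob_space \<mu>X" unfolding \<mu>X_def by (rule \<mu>.prob_space_distr) measurable
  have PY: "prob_space \<mu>Y" unfolding \<mu>Y_def by (rule \<mu>.prob_space_distr) measurable
  interpret \<mu>X: prob_space \<mu>X by (rule PX)
  interpret \<mu>Y: prob_space \<mu>Y by (rule PY)
  interpret \<nu>: prob_space \<nu> unfolding \<nu>_def by (rule prob_space_pair[OF PX PY])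
  have setsX[measurable_cong]: "sets \<mu>X = sets MX" by (simp add: \<mu>X_def)
  have setsY[measurable_cong]: "sets \<mu>Y = sets MY" by (simp add: \<mu>Y_def)
  have setsv: "sets \<nu> = sets \<mu>"
    unfolding \<nu>_def using sets by (simp add: sets_pair_measure_cong[OF setsX setsY])
  have ac': "absolutely_continuous \<nu> \<mu>" using ac by (simp add: \<nu>_def \<mu>X_def \<mu>Y_def)
  have RNm: "RN_deriv \<nu> \<mu> \<in> borel_measurable \<mu>"
    by (subst measurable_cong_sets[OF setsv[symmetric] refl]) (rule borel_measurable_RN_deriv)
  have pm[measurable]: "p \<in> borel_measurable \<mu>" unfolding p_def using RNm by measurable
  have pnn: "0 \<le> p u" for u by (simp add: p_def)
  have pos: "AE u in \<mu>. 0 < p u"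
  proof -
    obtain D where D: "D \<in> borel_measurable \<nu>" "AE x in \<nu>. RN_deriv \<nu> \<mu> x = ennreal (D x)"
      "AE x in \<mu>. 0 < D x" "\<And>x. 0 \<le> D x"
      using \<nu>.real_RN_deriv[of \<mu>] \<mu>.finite_measure_axioms ac' setsv by metis
    have "AE x in \<mu>. RN_deriv \<nu> \<mu> x = ennreal (D x)"
      using absolutely_continuous_AE[OF setsv[symmetric] ac' D(2)] .
    with D(3) show ?thesis by eventually_elim (simp add: p_def D(4))
  qed
  have fin: "AE u in \<nu>. RN_deriv \<nu> \<mu> u = ennreal (p u)"
  proof -
    have "AE u in \<nu>. RN_deriv \<nu> \<mu> u \<noteq> \<infinity>"
      using \<nu>.RN_deriv_finite[OF \<mu>.sigma_finite_measure_axioms ac' setsv[symmetric]] .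
    then show ?thesis by eventually_elim (auto simp: p_def less_top[symmetric])
  qed
  define S where "S w = (1/real n) * (\<Sum>j<n. exp (g (fst (w i)) (snd (w j))))" for w :: "nat \<Rightarrow> 'x \<times> 'y"
  define R where "R w = exp (g (fst (w i)) (snd (w i))) / (S w * p (w i))" for w
  have Spos: "0 < S w" for w
  proof -
    have "0 < (\<Sum>j<n. exp (g (fst (w i)) (snd (w j))))" using i by (intro sum_pos) auto
    then show ?thesis using i by (simp add: S_def)
  qed
  have Rm[measurable]: "R \<in> borel_measurable ?M" unfolding R_def S_def by measurable
  have Rnn: "0 \<le> R w" for w using Spos[of w] pnn[of "w i"] by (simp add: R_def)
  have F3: "(\<integral>\<^sup>+ w. ennreal (R w) \<partial>?M) \<le> 1"
  proof -
    define I' where "I' = {..<n} - {i}"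
    have I': "finite I'" "i \<notin> I'" "insert i I' = {..<n}" using i by (auto simp: I'_def)
    let ?N = "PiM I' (\<lambda>_. \<mu>)"
    interpret PS: product_sigma_finite "\<lambda>_. \<mu>"
      by (simp add: product_sigma_finite_def \<mu>.sigma_finite_measure_axioms)
    interpret PN: prob_space ?N using P by (intro prob_space_PiM) auto
    interpret NX: pair_sigma_finite ?N \<mu>X
      by (simp add: pair_sigma_finite_def PN.sigma_finite_measure_axioms \<mu>X.sigma_finite_measure_axioms)
    define \<Phi> where "\<Phi> w' a b = exp (g a b) / ((1/real n) * (exp (g a b) + (\<Sum>j\<in>I'. exp (g a (snd (w' j))))))"
      for w' :: "nat \<Rightarrow> 'x \<times> 'y" and a b
    have \<Phi>nn: "0 \<le> \<Phi> w' a b" for w' a b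
      unfolding \<Phi>_def by (intro divide_nonneg_nonneg mult_nonneg_nonneg add_nonneg_nonneg sum_nonneg) auto
    have \<Phi>jm[measurable]: "(\<lambda>x. ennreal (\<Phi> (fst (fst x)) (snd (fst x)) (snd x))) \<in> borel_measurable ((?N \<Otimes>\<^sub>M MX) \<Otimes>\<^sub>M MY)"
      unfolding \<Phi>_def by measurable
    have \<Phi>jm'[measurable]: "(\<lambda>x. \<Phi> (fst (fst x)) (snd (fst x)) (snd x)) \<in> borel_measurable ((?N \<Otimes>\<^sub>M MX) \<Otimes>\<^sub>M MY)"
      unfolding \<Phi>_def by measurable
    have \<Phi>m: "(\<lambda>u. \<Phi> w' (fst u) (snd u)) \<in> borel_measurable (MX \<Otimes>\<^sub>M MY)" if "w' \<in> space ?N" for w'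
      using measurable_compose[OF _ \<Phi>jm', of "\<lambda>u. ((w', fst u), snd u)"] that by simp
    have sumi: "(\<Sum>j<n. F j) = F i + (\<Sum>j\<in>I'. F j)" for F :: "nat \<Rightarrow> real"
      using sum.insert[OF I'(1,2), of F] I'(3) by simp
    have step1: "(\<integral>\<^sup>+ w. ennreal (R w) \<partial>?M) = (\<integral>\<^sup>+ w'. \<integral>\<^sup>+ u. ennreal (R (w'(i:=u))) \<partial>\<mu> \<partial>?N)"
      using PS.product_nn_integral_insert[OF I'(1,2), of "\<lambda>w. ennreal (R w)"] I'(3) by simp
    have step2: "(\<integral>\<^sup>+ u. ennreal (R (w'(i:=u))) \<partial>\<mu>) \<le> (\<integral>\<^sup>+ a. \<integral>\<^sup>+ b. ennreal (\<Phi> w' a b) \<partial>\<mu>Y \<partial>\<mu>X)"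
      if w': "w' \<in> space ?N" for w'
    proof -
      have eq: "R (w'(i:=u)) = \<Phi> w' (fst u) (snd u) / p u" for u
      proof -
        have "(\<Sum>j\<in>I'. exp (g (fst u) (snd ((w'(i:=u)) j)))) = (\<Sum>j\<in>I'. exp (g (fst u) (snd (w' j))))"
          using I'(2) by (intro sum.cong) auto
        then show ?thesis
          unfolding R_def S_def \<Phi>_def sumi[of "\<lambda>j. exp (g (fst ((w'(i:=u)) i)) (snd ((w'(i:=u)) j)))"]
          by simp
      qed
      have fm: "(\<lambda>u. ennreal (\<Phi> w' (fst u) (snd u) / p u)) \<in> borel_measurable \<nu>"
      proof -
        note \<Phi>m[OF w', measurable]
        have "(\<lambda>u. ennreal (\<Phi> w' (fst u) (snd u) / p u)) \<in> borel_measurable \<mu>" by measurable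
        then show ?thesis by (subst measurable_cong_sets[OF setsv refl])
      qed
      have "(\<integral>\<^sup>+ u. ennreal (R (w'(i:=u))) \<partial>\<mu>) = (\<integral>\<^sup>+ u. ennreal (\<Phi> w' (fst u) (snd u) / p u) \<partial>\<mu>)"
        by (simp add: eq)
      also have "\<dots> = (\<integral>\<^sup>+ u. RN_deriv \<nu> \<mu> u * ennreal (\<Phi> w' (fst u) (snd u) / p u) \<partial>\<nu>)"
        by (rule \<nu>.RN_deriv_nn_integral[OF ac' setsv[symmetric] fm])
      also have "\<dots> \<le> (\<integral>\<^sup>+ u. ennreal (\<Phi> w' (fst u) (snd u)) \<partial>\<nu>)"
        using fin
      proof (intro nn_integral_mono_AE, eventually_elim)
        fix u assume RNu: "RN_deriv \<nu> \<mu> u = ennreal (p u)"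
        have le: "p u * (\<Phi> w' (fst u) (snd u) / p u) \<le> \<Phi> w' (fst u) (snd u)"
          using \<Phi>nn pnn[of u] by (cases "p u = 0") auto
        show "RN_deriv \<nu> \<mu> u * ennreal (\<Phi> w' (fst u) (snd u) / p u) \<le> ennreal (\<Phi> w' (fst u) (snd u))"
        proof -
          have "ennreal (p u) * ennreal (\<Phi> w' (fst u) (snd u) / p u) = ennreal (p u * (\<Phi> w' (fst u) (snd u) / p u))"
            by (rule ennreal_mult[symmetric]) (use pnn[of u] \<Phi>nn in auto)
          with RNu le show ?thesis by (simp add: ennreal_leI)
        qed
      qed
      also have "\<dots> = (\<integral>\<^sup>+ a. \<integral>\<^sup>+ b. ennreal (\<Phi> w' a b) \<partial>\<mu>Y \<partial>\<mu>X)"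
        unfolding \<nu>_def
        by (rule \<mu>Y.nn_integral_fst[symmetric, where f="\<lambda>u. ennreal (\<Phi> w' (fst u) (snd u))", simplified])
           (use \<Phi>m[OF w'] in measurable)
      finally show ?thesis .
    qed
    have step4: "(\<integral>\<^sup>+ w'. \<integral>\<^sup>+ a. \<integral>\<^sup>+ b. ennreal (\<Phi> w' a b) \<partial>\<mu>Y \<partial>\<mu>X \<partial>?N)
        = (\<integral>\<^sup>+ a. \<integral>\<^sup>+ w'. \<integral>\<^sup>+ b. ennreal (\<Phi> w' a b) \<partial>\<mu>Y \<partial>?N \<partial>\<mu>X)"
    proof (rule NX.Fubini'[symmetric])
      show "(\<lambda>(w', a). \<integral>\<^sup>+ b. ennreal (\<Phi> w' a b) \<partial>\<mu>Y) \<in> borel_measurable (?N \<Otimes>\<^sub>M \<mu>X)"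
        using \<mu>Y.borel_measurable_nn_integral_fst[of "\<lambda>x. ennreal (\<Phi> (fst (fst x)) (snd (fst x)) (snd x))" "?N \<Otimes>\<^sub>M \<mu>X"]
        by (simp add: split_beta' measurable_cong_sets[OF sets_pair_measure_cong[OF sets_pair_measure_cong[OF refl setsX] setsY] refl])
    qed
    have step5: "(\<integral>\<^sup>+ w'. \<integral>\<^sup>+ b. ennreal (\<Phi> w' a b) \<partial>\<mu>Y \<partial>?N) = 1" if a: "a \<in> space \<mu>X" for a
    proof -
      have aX: "a \<in> space MX" using a by (simp add: \<mu>X_def)
      define H where "H w = ennreal (exp (g a (snd (w i))) / ((1/real n) * (\<Sum>j<n. exp (g a (snd (w j))))))"
        for w :: "nat \<Rightarrow> 'x \<times> 'y"
      have ham[measurable]: "(\<lambda>u. g a (snd u)) \<in> borel_measurable \<mu>" using aX by measurable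
      have Hm[measurable]: "H \<in> borel_measurable ?M" unfolding H_def by measurable
      have "(\<integral>\<^sup>+ w'. \<integral>\<^sup>+ b. ennreal (\<Phi> w' a b) \<partial>\<mu>Y \<partial>?N) = (\<integral>\<^sup>+ w'. \<integral>\<^sup>+ u. H (w'(i:=u)) \<partial>\<mu> \<partial>?N)"
      proof (rule nn_integral_cong)
        fix w' assume w': "w' \<in> space ?N"
        have "(\<integral>\<^sup>+ b. ennreal (\<Phi> w' a b) \<partial>\<mu>Y) = (\<integral>\<^sup>+ u. ennreal (\<Phi> w' a (snd u)) \<partial>\<mu>)"
          unfolding \<mu>Y_def
          by (rule nn_integral_distr) (use \<Phi>jm[THEN measurable_compose[rotated], of "\<lambda>b. ((w', a), b)"] w' aX in simp_all)
        also have "\<dots> = (\<integral>\<^sup>+ u. H (w'(i:=u)) \<partial>\<mu>)"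
        proof (rule nn_integral_cong)
          fix u
          have "(\<Sum>j\<in>I'. exp (g a (snd ((w'(i:=u)) j)))) = (\<Sum>j\<in>I'. exp (g a (snd (w' j))))"
            using I'(2) by (intro sum.cong) auto
          then show "ennreal (\<Phi> w' a (snd u)) = H (w'(i:=u))"
            unfolding H_def \<Phi>_def sumi[of "\<lambda>j. exp (g a (snd ((w'(i:=u)) j)))"] by simp
        qed
        finally show "(\<integral>\<^sup>+ b. ennreal (\<Phi> w' a b) \<partial>\<mu>Y) = (\<integral>\<^sup>+ u. H (w'(i:=u)) \<partial>\<mu>)" .
      qed
      also have "\<dots> = (\<integral>\<^sup>+ w. H w \<partial>?M)"
        using PS.product_nn_integral_insert[OF I'(1,2), of H] I'(3) by simp
      also have "\<dots> = (\<integral>\<^sup>+ (w :: nat \<Rightarrow> 'x \<times> 'y). of_nat n * ennreal (exp (g a (snd (w i))) / (\<Sum>j<n. exp (g a (snd (w j))))) \<partial>?M)"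
      proof (rule nn_integral_cong)
        fix w :: "nat \<Rightarrow> 'x \<times> 'y"
        have "exp (g a (snd (w i))) / ((1/real n) * (\<Sum>j<n. exp (g a (snd (w j)))))
              = real n * (exp (g a (snd (w i))) / (\<Sum>j<n. exp (g a (snd (w j)))))"
          using i by (simp add: field_simps)
        then show "H w = of_nat n * ennreal (exp (g a (snd (w i))) / (\<Sum>j<n. exp (g a (snd (w j)))))"
          unfolding H_def
          by (simp add: ennreal_mult[symmetric] ennreal_of_nat_eq_real_of_nat sum_nonneg)
      qed
      also have "\<dots> = of_nat n * (\<integral>\<^sup>+ (w :: nat \<Rightarrow> 'x \<times> 'y). ennreal (exp (g a (snd (w i))) / (\<Sum>j<n. exp (g a (snd (w j))))) \<partial>?M)"
        by (rule nn_integral_cmult) measurable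
      also have "\<dots> = 1"
        by (rule infonce_sym[OF P ham i])
      finally show ?thesis .
    qed
    have "(\<integral>\<^sup>+ w. ennreal (R w) \<partial>?M) \<le> (\<integral>\<^sup>+ w'. \<integral>\<^sup>+ a. \<integral>\<^sup>+ b. ennreal (\<Phi> w' a b) \<partial>\<mu>Y \<partial>\<mu>X \<partial>?N)"
      unfolding step1 by (intro nn_integral_mono step2)
    also have "\<dots> = (\<integral>\<^sup>+ a. 1 \<partial>\<mu>X)"
      unfolding step4 by (intro nn_integral_cong step5)
    also have "\<dots> = 1" by (simp add: \<mu>X.emeasure_space_1)
    finally show ?thesis .
  qed
  have Rint: "integrable ?M R"
    by (rule integrableI_nonneg) (use Rm Rnn F3 in \<open>auto intro: le_less_trans\<close>)
  have "ennreal (\<integral>w. R w \<partial>?M) \<le> 1"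
    using nn_integral_eq_integral[OF Rint] F3 Rnn by simp
  then have Rle: "(\<integral>w. R w \<partial>?M) \<le> 1" by simp
  have comp[measurable]: "(\<lambda>w. w i) \<in> measurable ?M \<mu>"
    using measurable_component_singleton[of i "{..<n}" "\<lambda>_. \<mu>"] i by simp
  have distri: "distr ?M \<mu> (\<lambda>w. w i) = \<mu>"
    using distr_PiM_component[of "{..<n}" "\<lambda>_. \<mu>" i] P i by simp
  have KLint': "integrable \<mu> (\<lambda>u. ln (p u))"
    using KLint by (simp add: p_def \<nu>_def \<mu>X_def \<mu>Y_def)
  have Lint: "integrable ?M (\<lambda>w. ln (p (w i)))"
    using integrable_distr_eq[OF comp, of "\<lambda>u. ln (p u)"] KLint' distri by simp
  have Lval: "(\<integral>w. ln (p (w i)) \<partial>?M) = (\<integral>u. ln (p u) \<partial>\<mu>)"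
    using integral_distr[OF comp, of "\<lambda>u. ln (p u)"] distri by simp
  have AEi: "AE w in ?M. 0 < p (w i)"
    using AE_PiM_component[of "{..<n}" "\<lambda>_. \<mu>" i "\<lambda>u. 0 < p u"] P i pos by simp
  have pw: "AE w in ?M. T w - ln (p (w i)) + 1 \<le> R w"
    using AEi
  proof eventually_elim
    fix w assume pp: "0 < p (w i)"
    define e where "e = exp (g (fst (w i)) (snd (w i)))"
    have e: "0 < e" by (simp add: e_def)
    have "T w - ln (p (w i)) = ln (e / (S w * p (w i)))"
    proof -
      have Tw: "T w = ln (e / S w)" by (simp add: T_def S_def e_def)
      have "ln (e / (S w * p (w i))) = ln e - ln (S w * p (w i))" using e Spos[of w] pp by (simp add: ln_div)
      also have "\<dots> = ln e - ln (S w) - ln (p (w i))" using Spos[of w] pp by (simp add: ln_mult)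
      finally show ?thesis using Tw e Spos[of w] by (simp add: ln_div)
    qed
    also have "\<dots> \<le> e / (S w * p (w i)) - 1"
      by (rule ln_le_minus_one) (use e Spos[of w] pp in simp)
    finally show "T w - ln (p (w i)) + 1 \<le> R w" by (simp add: R_def e_def)
  qed
  have Tint': "integrable ?M T" using Tint unfolding T_def by simp
  have "(\<integral>w. T w - ln (p (w i)) + 1 \<partial>?M) \<le> (\<integral>w. R w \<partial>?M)"
    by (rule integral_mono_AE[OF _ Rint pw]) (intro Bochner_Integration.integrable_add Bochner_Integration.integrable_diff Tint' Lint, simp)
  also have "(\<integral>w. T w - ln (p (w i)) + 1 \<partial>?M) = (\<integral>w. T w \<partial>?M) - (\<integral>w. ln (p (w i)) \<partial>?M) + 1"
    using Tint' Lint by (simp add: PM.prob_space)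
  finally have "(\<integral>w. T w \<partial>?M) \<le> (\<integral>u. ln (p u) \<partial>\<mu>)" using Rle Lval by linarith
  then show ?thesis by (simp add: T_def p_def \<nu>_def \<mu>X_def \<mu>Y_def)
qed


lemma infonce_pointwise:
  fixes MX :: "'x measure" and MY :: "'y measure" and MZ :: "'z measure"
    and K :: "'z \<Rightarrow> ('x \<times> 'y) measure" and f :: "'x \<times> 'y \<times> 'z \<Rightarrow> real"
  assumes K: "K \<in> measurable MZ (prob_algebra (MX \<Otimes>\<^sub>M MY))"
    and fm: "f \<in> borel_measurable (MX \<Otimes>\<^sub>M MY \<Otimes>\<^sub>M MZ)"
    and z: "z \<in> space MZ"
    and i: "i < n"
    and Tint: "integrable (PiM {..<n} (\<lambda>_. K z)) (cinfonce_term n i f z)"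
  shows "ennreal (cinfonce_inner n i K f z) \<le> D_KL (K z) (distr (K z) MX fst \<Otimes>\<^sub>M distr (K z) MY snd)"
proof (cases "absolutely_continuous (distr (K z) MX fst \<Otimes>\<^sub>M distr (K z) MY snd) (K z) \<and>
    integrable (K z) (entropy_density (exp 1) (distr (K z) MX fst \<Otimes>\<^sub>M distr (K z) MY snd) (K z))")
  case False
  then show ?thesis unfolding D_KL_def by (subst if_not_P) simp_all
next
  case True
  have Kz: "K z \<in> space (prob_algebra (MX \<Otimes>\<^sub>M MY))" using K z by (rule measurable_space)
  then have P: "prob_space (K z)" and sets: "sets (K z) = sets (MX \<Otimes>\<^sub>M MY)"
    by (auto simp: space_prob_algebra)
  note fm[measurable]
  have gm: "(\<lambda>(a,b). f (a, b, z)) \<in> borel_measurable (MX \<Otimes>\<^sub>M MY)"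
    using z by measurable
  have ed: "entropy_density (exp 1) N M = (\<lambda>u. ln (enn2real (RN_deriv N M u)))" for N M :: "('x \<times> 'y) measure"
    by (simp add: entropy_density_def comp_def log_def fun_eq_iff)
  have le: "cinfonce_inner n i K f z \<le> (\<integral>u. ln (enn2real (RN_deriv (distr (K z) MX fst \<Otimes>\<^sub>M distr (K z) MY snd) (K z) u)) \<partial>K z)"
  proof -
    have Tint': "integrable (PiM {..<n} (\<lambda>_. K z)) (\<lambda>w. ln (exp (f (fst (w i), snd (w i), z)) /
                 ((1 / real n) * (\<Sum>j<n. exp (f (fst (w i), snd (w j), z))))))"
      using Tint unfolding cinfonce_term_def .
    have "integrable (K z) (\<lambda>u. ln (enn2real (RN_deriv (distr (K z) MX fst \<Otimes>\<^sub>M distr (K z) MY snd) (K z) u)))"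
      using True by (simp add: ed)
    from infonce_core[where g="\<lambda>a b. f (a, b, z)", OF P sets _ i _ Tint' this] gm True
    show ?thesis unfolding cinfonce_inner_def cinfonce_term_def by simp
  qed
  show ?thesis
    using True le by (simp add: D_KL_def KL_divergence_def ed ennreal_leI)
qed

theorem proposition2p3:
  fixes MX :: "'x measure" and MY :: "'y measure" and MZ :: "'z measure"
    and P :: "('x \<times> 'y \<times> 'z) measure" and PZ :: "'z measure"
    and K :: "'z \<Rightarrow> ('x \<times> 'y) measure"
    and n i :: nat
  assumes "prob_space P"
    and "sets P = sets (MX \<Otimes>\<^sub>M MY \<Otimes>\<^sub>M MZ)"
    and "is_cond_kernel MX MY MZ P PZ K"
    and "1 \<le> n" and "i < n"
  shows "C_InfoNCE MX MY MZ PZ K n i \<le> enn2ereal (cond_MI MX MY PZ K)"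
  unfolding C_InfoNCE_def
proof (rule SUP_least)
  fix f assume "f \<in> {f. admissible_critic MX MY MZ PZ K n i f}"
  then have fm: "f \<in> borel_measurable (MX \<Otimes>\<^sub>M MY \<Otimes>\<^sub>M MZ)"
    and Tint: "\<And>z. z \<in> space PZ \<Longrightarrow> integrable (PiM {..<n} (\<lambda>_. K z)) (cinfonce_term n i f z)"
    and hint: "integrable PZ (cinfonce_inner n i K f)"
    by (auto simp: admissible_critic_def)
  have PZ: "PZ = distr P MZ (\<lambda>w. snd (snd w))" and K: "K \<in> measurable MZ (prob_algebra (MX \<Otimes>\<^sub>M MY))"
    using assms(3) by (auto simp: is_cond_kernel_def)
  have spPZ: "space PZ = space MZ" using PZ by simp
  define D where "D z = D_KL (K z) (distr (K z) MX fst \<Otimes>\<^sub>M distr (K z) MY snd)" for z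
  let ?h = "cinfonce_inner n i K f"
  have pt: "ennreal (?h z) \<le> D z" if "z \<in> space PZ" for z
    unfolding D_def using infonce_pointwise[OF K fm _ assms(5) Tint] that spPZ by simp
  have nnle: "(\<integral>\<^sup>+ z. ennreal (?h z) \<partial>PZ) \<le> (\<integral>\<^sup>+ z. D z \<partial>PZ)"
    by (rule nn_integral_mono) (rule pt)
  have CMI: "cond_MI MX MY PZ K = (\<integral>\<^sup>+ z. D z \<partial>PZ)" by (simp add: cond_MI_def D_def)
  show "ereal (\<integral>z. ?h z \<partial>PZ) \<le> enn2ereal (cond_MI MX MY PZ K)"
  proof (cases "(\<integral>\<^sup>+ z. D z \<partial>PZ) = \<infinity>")
    case True
    then show ?thesis by (simp add: CMI)
  next
    case False
    have "(\<integral>z. ?h z \<partial>PZ) \<le> enn2real (\<integral>\<^sup>+ z. ennreal (?h z) \<partial>PZ)"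
      unfolding real_lebesgue_integral_def[OF hint] by simp
    also have "\<dots> \<le> enn2real (\<integral>\<^sup>+ z. D z \<partial>PZ)"
      using nnle False by (intro enn2real_mono) (auto simp: less_top)
    finally have "ereal (\<integral>z. ?h z \<partial>PZ) \<le> ereal (enn2real (\<integral>\<^sup>+ z. D z \<partial>PZ))" by simp
    also have "ereal (enn2real (\<integral>\<^sup>+ z. D z \<partial>PZ)) = enn2ereal (\<integral>\<^sup>+ z. D z \<partial>PZ)"
      using False by (cases "(\<integral>\<^sup>+ z. D z \<partial>PZ)") (auto simp: less_top)
    finally show ?thesis by (simp add: CMI)
  qed
qed

end
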